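(* Let $(\mathbf{x}_i,y_i)_{i=1}^n\subset\mathbb{R}^d\times\{\pm1\}$, $\mathbf{z}_i:=y_i\mathbf{x}_i$, $\bar{\mathbf{z}}:=\frac1n\sum_i\mathbf{z}_i$, and suppose there are $r>0$ and $0<q<1$ with $\frac1n|\{i:\mathbf{z}_i^\top\bar{\mathbf{z}}<-r\}|\ge q$. Let $L(\mathbf{w})=\frac1n\sum_i\ln(1+\exp(-\mathbf{z}_i^\top\mathbf{w}))$ and let $\mathbf{w}_1=\mathbf{w}_0-\eta\nabla L(\mathbf{w}_0)$ with $\mathbf{w}_0=0$, $\eta>0$. If $L(\mathbf{w}_1)\le L(\mathbf{w}_0)$, then $\eta\le\frac{2\ln2}{rq}$. *)

theory Defs
  imports "HOL-Analysis.Analysis"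
begin

definition logistic_loss :: "nat \<Rightarrow> (nat \<Rightarrow> 'a::real_inner) \<Rightarrow> 'a \<Rightarrow> real" where
  "logistic_loss n z w = (1 / real n) * (\<Sum>i<n. ln (1 + exp (- (z i \<bullet> w))))"

end

theory Submission
  imports Defs
begin

lemma d1: fixes z :: "'a::real_inner"
  shows "((\<lambda>w. ln (1 + exp (- (z \<bullet> w)))) has_derivative (\<lambda>h. - (1/2) * (z \<bullet> h))) (at 0)"
proof -
  have "((\<lambda>w. ln (1 + exp (- (z \<bullet> w)))) has_derivative
     (\<lambda>h. (1 / (1 + exp (- (z \<bullet> 0)))) * (exp (- (z \<bullet> 0)) * (- (z \<bullet> h))))) (at 0)"
    by (auto intro!: derivative_eq_intros simp: add_pos_pos)
  then show ?thesis by simp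
qed

lemma ln1exp: "(t::real) < ln (1 + exp t)"
proof -
  have "exp t < 1 + exp t" by simp
  then have "ln (exp t) < ln (1 + exp t)" by (subst ln_less_cancel_iff) (auto simp: add_pos_pos)
  then show ?thesis by simp
qed

theorem mainTheorem15:
  fixes x :: "nat \<Rightarrow> 'a::euclidean_space" and y :: "nat \<Rightarrow> real"
    and n :: nat and r q \<eta> :: real and g :: 'a
  assumes n_pos: "0 < n"
    and labels: "\<forall>i<n. y i = 1 \<or> y i = -1"
    and r_pos: "0 < r" and q_pos: "0 < q" and q_lt1: "q < 1"
    and frac: "real (card {i. i < n \<and>
                 (y i *\<^sub>R x i) \<bullet> ((1 / real n) *\<^sub>R (\<Sum>j<n. y j *\<^sub>R x j)) < - r}) / real n \<ge> q"
    and eta_pos: "0 < \<eta>"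
    and grad: "GDERIV (logistic_loss n (\<lambda>i. y i *\<^sub>R x i)) 0 :> g"
    and descent: "logistic_loss n (\<lambda>i. y i *\<^sub>R x i) (0 - \<eta> *\<^sub>R g)
                    \<le> logistic_loss n (\<lambda>i. y i *\<^sub>R x i) 0"
  shows "\<eta> \<le> 2 * ln 2 / (r * q)"
proof -
  define z where "z = (\<lambda>i. y i *\<^sub>R x i)"
  define zb where "zb = (1 / real n) *\<^sub>R (\<Sum>j<n. z j)"
  define c where "c = - (1/2) *\<^sub>R zb"
  define S where "S = {i. i < n \<and> z i \<bullet> zb < - r}"
  have L: "logistic_loss n z = (\<lambda>w. (1 / real n) * (\<Sum>i<n. ln (1 + exp (- (z i \<bullet> w)))))"
    by (rule ext) (simp add: logistic_loss_def)
  have D: "(logistic_loss n z has_derivative (\<lambda>h. (1 / real n) * (\<Sum>i<n. - (1/2) * (z i \<bullet> h)))) (at 0)"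
    unfolding L by (intro has_derivative_mult_right has_derivative_sum d1)
  have eqc: "(\<lambda>h. (1 / real n) * (\<Sum>i<n. - (1/2) * (z i \<bullet> h))) = (\<lambda>h. h \<bullet> c)"
  proof (rule ext)
    fix h
    have "h \<bullet> c = (- (1/2) * (1 / real n)) * ((\<Sum>i<n. z i) \<bullet> h)"
      by (simp only: c_def zb_def inner_commute[of h] inner_scaleR_left scaleR_scaleR)
    also have "(\<Sum>i<n. z i) \<bullet> h = (\<Sum>i<n. z i \<bullet> h)" by (rule inner_sum_left)
    also have "(- (1/2) * (1 / real n)) * (\<Sum>i<n. z i \<bullet> h) = (1 / real n) * (- (1/2) * (\<Sum>i<n. z i \<bullet> h))"
      by (simp only: mult_ac)
    also have "- (1/2) * (\<Sum>i<n. z i \<bullet> h) = (\<Sum>i<n. - (1/2) * (z i \<bullet> h))"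
      by (rule sum_distrib_left)
    finally show "(1 / real n) * (\<Sum>i<n. - (1/2) * (z i \<bullet> h)) = h \<bullet> c" by simp
  qed
  have G: "(logistic_loss n z has_derivative (\<lambda>h. h \<bullet> g)) (at 0)"
    using grad by (simp add: gderiv_def z_def)
  have "(\<lambda>h. h \<bullet> g) = (\<lambda>h. h \<bullet> c)"
    using has_derivative_unique[OF G D[unfolded eqc]] .
  then have "(g - c) \<bullet> g = (g - c) \<bullet> c" by (rule fun_cong)
  then have "(g - c) \<bullet> (g - c) = 0" by (simp add: inner_diff_right)
  then have gc: "g = c" by simp
  have L0: "logistic_loss n z 0 = ln 2"
    using n_pos by (simp add: logistic_loss_def)
  have L1: "logistic_loss n z (0 - \<eta> *\<^sub>R g) = (1 / real n) * (\<Sum>i<n. ln (1 + exp (- (\<eta>/2) * (z i \<bullet> zb))))"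
    by (simp add: logistic_loss_def gc c_def)
  have sub: "S \<subseteq> {..<n}" by (auto simp: S_def)
  have "(\<Sum>i\<in>S. \<eta> * r / 2) \<le> (\<Sum>i\<in>S. ln (1 + exp (- (\<eta>/2) * (z i \<bullet> zb))))"
  proof (rule sum_mono)
    fix i assume "i \<in> S"
    then have "z i \<bullet> zb < - r" by (simp add: S_def)
    then have "(\<eta>/2) * r \<le> (\<eta>/2) * (- (z i \<bullet> zb))" using eta_pos
      by (intro mult_left_mono) auto
    then have "\<eta> * r / 2 \<le> - (\<eta>/2) * (z i \<bullet> zb)" by simp
    also have "\<dots> \<le> ln (1 + exp (- (\<eta>/2) * (z i \<bullet> zb)))" using ln1exp less_imp_le by blast
    finally show "\<eta> * r / 2 \<le> ln (1 + exp (- (\<eta>/2) * (z i \<bullet> zb)))" .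
  qed
  also have "\<dots> \<le> (\<Sum>i<n. ln (1 + exp (- (\<eta>/2) * (z i \<bullet> zb))))"
    by (rule sum_mono2[OF _ sub]) auto
  finally have A: "real (card S) * (\<eta> * r / 2) \<le> (\<Sum>i<n. ln (1 + exp (- (\<eta>/2) * (z i \<bullet> zb))))"
    by simp
  have B: "q * real n \<le> real (card S)"
    using frac n_pos by (simp add: S_def z_def zb_def pos_le_divide_eq)
  have "q * real n * (\<eta> * r / 2) \<le> real (card S) * (\<eta> * r / 2)"
    using B eta_pos r_pos by (intro mult_right_mono) auto
  also note A
  also have "(\<Sum>i<n. ln (1 + exp (- (\<eta>/2) * (z i \<bullet> zb)))) \<le> real n * ln 2"
  proof -
    have "logistic_loss n z (0 - \<eta> *\<^sub>R g) \<le> logistic_loss n z 0"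
      using descent by (simp only: z_def)
    then have "(1 / real n) * (\<Sum>i<n. ln (1 + exp (- (\<eta>/2) * (z i \<bullet> zb)))) \<le> ln 2"
      by (simp only: L0 L1)
    then show ?thesis using n_pos by (simp add: field_simps)
  qed
  finally have "q * (\<eta> * r / 2) \<le> ln 2" using n_pos
    by (smt (verit) mult.commute mult.left_commute mult_le_cancel_left_pos of_nat_0_less_iff)
  then show ?thesis using r_pos q_pos
    by (simp add: field_simps)
qed

end
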